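(* Let $G=(V,E,w)$ be an instance of TSP, let $V_b$ be the set of bad vertices and $V_g=V\setminus V_b$ the set of good vertices, and assume $\min\{|V_g|,|V_b|\}\ge 3$. Let $o\in V_g$ be any good vertex, let $T_b^*$ be a minimum-weight TSP tour (Hamiltonian cycle) of the induced subgraph $G[V_b\cup\{o\}]$, and let $T_g^*$ be a minimum-weight TSP tour of $G[V_g]$. Then $\mathrm{OPT}\ge w(T_b^* )$ and $\mathrm{OPT}\ge w(T_g^* )$.
   Context: An instance of TSP is a complete graph $G=(V,E,w)$ with a symmetric non-negative edge-weight function $w$ (with $w(a,a)=0$). A TSP tour is a Hamiltonian cycle; its weight $w(\cdot)$ is the sum of its edge weights, and $\mathrm{OPT}$ is the minimum weight of a TSP tour of $G$. A triangle on three distinct vertices $a,b,c$ is violating if the three weights among them violate the triangle inequality (some side exceeds the sum of the other two). A vertex is bad if it belongs to some violating triangle, and good otherwise. *)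

theory Defs
  imports Complex_Main
begin

definition tsp_instance :: "'a set \<Rightarrow> ('a \<Rightarrow> 'a \<Rightarrow> real) \<Rightarrow> bool" where
  "tsp_instance V w \<longleftrightarrow> finite V \<and>
     (\<forall>a\<in>V. \<forall>b\<in>V. w a b = w b a \<and> w a b \<ge> 0) \<and> (\<forall>a\<in>V. w a a = 0)"

text \<open>A Hamiltonian cycle (TSP tour) of the complete graph on S, as a cyclic list
  visiting every vertex of S exactly once.\<close>
definition is_tour :: "'a set \<Rightarrow> 'a list \<Rightarrow> bool" where
  "is_tour S xs \<longleftrightarrow> distinct xs \<and> set xs = S \<and> length xs \<ge> 3"

definition tour_weight :: "('a \<Rightarrow> 'a \<Rightarrow> real) \<Rightarrow> 'a list \<Rightarrow> real" where
  "tour_weight w xs = (\<Sum>i<length xs. w (xs ! i) (xs ! ((i + 1) mod length xs)))"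

definition is_min_tour :: "('a \<Rightarrow> 'a \<Rightarrow> real) \<Rightarrow> 'a set \<Rightarrow> 'a list \<Rightarrow> bool" where
  "is_min_tour w S xs \<longleftrightarrow> is_tour S xs \<and>
     (\<forall>ys. is_tour S ys \<longrightarrow> tour_weight w xs \<le> tour_weight w ys)"

definition OPT :: "'a set \<Rightarrow> ('a \<Rightarrow> 'a \<Rightarrow> real) \<Rightarrow> real" where
  "OPT V w = Min {tour_weight w xs | xs. is_tour V xs}"

definition violating :: "('a \<Rightarrow> 'a \<Rightarrow> real) \<Rightarrow> 'a \<Rightarrow> 'a \<Rightarrow> 'a \<Rightarrow> bool" where
  "violating w a b c \<longleftrightarrow> a \<noteq> b \<and> b \<noteq> c \<and> a \<noteq> c \<and>
     (w a b > w a c + w c b \<or> w b c > w b a + w a c \<or> w a c > w a b + w b c)"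

definition bad_vertices :: "'a set \<Rightarrow> ('a \<Rightarrow> 'a \<Rightarrow> real) \<Rightarrow> 'a set" where
  "bad_vertices V w = {a \<in> V. \<exists>b\<in>V. \<exists>c\<in>V. violating w a b c}"

definition good_vertices :: "'a set \<Rightarrow> ('a \<Rightarrow> 'a \<Rightarrow> real) \<Rightarrow> 'a set" where
  "good_vertices V w = V - bad_vertices V w"

end

theory Submission
  imports Defs
begin

fun pw :: "('a \<Rightarrow> 'a \<Rightarrow> real) \<Rightarrow> 'a list \<Rightarrow> real" where
  "pw w (x # y # zs) = w x y + pw w (y # zs)"
| "pw w _ = 0"

lemma pw_sum: "pw w xs = (\<Sum>i<length xs - 1. w (xs ! i) (xs ! Suc i))"
proof (induction w xs rule: pw.induct)
  case (1 w x y zs)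
  have "(\<Sum>i<length (x # y # zs) - 1. w ((x # y # zs) ! i) ((x # y # zs) ! Suc i))
     = (\<Sum>i<Suc (length zs). w ((x # y # zs) ! i) ((x # y # zs) ! Suc i))" by simp
  also have "\<dots> = w x y + (\<Sum>i<length zs. w ((y # zs) ! i) ((y # zs) ! Suc i))"
    by (subst sum.lessThan_Suc_shift) simp
  finally show ?case using 1 by simp
qed auto

lemma tw_pw:
  assumes "xs \<noteq> []"
  shows "tour_weight w xs = pw w xs + w (last xs) (hd xs)"
proof -
  obtain m where m: "length xs = Suc m" using assms by (cases xs) auto
  have "tour_weight w xs = (\<Sum>i<Suc m. w (xs ! i) (xs ! ((i + 1) mod Suc m)))"
    unfolding tour_weight_def m by simp
  also have "\<dots> = (\<Sum>i<m. w (xs ! i) (xs ! ((i + 1) mod Suc m))) + w (xs ! m) (xs ! 0)"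
    by simp
  also have "(\<Sum>i<m. w (xs ! i) (xs ! ((i + 1) mod Suc m))) = (\<Sum>i<m. w (xs ! i) (xs ! Suc i))"
    by (rule sum.cong) auto
  also have "\<dots> = pw w xs" using pw_sum[of w xs] m by simp
  also have "xs ! m = last xs" using m assms by (simp add: last_conv_nth)
  also have "xs ! 0 = hd xs" using assms by (simp add: hd_conv_nth)
  finally show ?thesis .
qed

lemma pw_cons: "ys \<noteq> [] \<Longrightarrow> pw w (x # ys) = w x (hd ys) + pw w ys"
  by (cases ys) auto

lemma pw_snoc: "ys \<noteq> [] \<Longrightarrow> pw w (ys @ [x]) = pw w ys + w (last ys) x"
proof (induction ys)
  case (Cons a ys)
  then show ?case by (cases ys) auto
qed simp

lemma tw_rotate1: "tour_weight w (rotate1 xs) = tour_weight w xs"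
proof (cases xs)
  case (Cons x ys)
  show ?thesis
  proof (cases "ys = []")
    case False
    then show ?thesis using Cons
      by (simp add: tw_pw pw_snoc pw_cons hd_append)
  qed (simp add: Cons)
qed simp

lemma tw_rotate: "tour_weight w (rotate n xs) = tour_weight w xs"
  by (induction n) (simp_all add: tw_rotate1)

lemma tw_swap: "tour_weight w (us @ vs) = tour_weight w (vs @ us)"
  by (metis rotate_append tw_rotate)

lemma tw_remove:
  assumes "vs @ us \<noteq> []"
    and "w (last (vs @ us)) (hd (vs @ us)) \<le> w (last (vs @ us)) x + w x (hd (vs @ us))"
  shows "tour_weight w (us @ vs) \<le> tour_weight w (us @ x # vs)"
proof -
  define z where "z = vs @ us"
  have z: "z \<noteq> []" using assms(1) z_def by simp
  have "tour_weight w (us @ x # vs) = tour_weight w (x # z)"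
    using tw_swap[of w us "x # vs"] z_def by simp
  also have "\<dots> = w x (hd z) + pw w z + w (last z) x"
    using z by (simp add: tw_pw pw_cons)
  finally have 1: "tour_weight w (us @ x # vs) = w x (hd z) + pw w z + w (last z) x" .
  have 2: "tour_weight w (us @ vs) = pw w z + w (last z) (hd z)"
    using tw_swap[of w us vs] z_def z tw_pw[of z w] by simp
  show ?thesis using 1 2 assms(2) unfolding z_def[symmetric] by simp
qed

lemma shrink:
  assumes step: "\<And>xs. distinct xs \<Longrightarrow> K \<subseteq> set xs \<Longrightarrow> set xs \<subseteq> V \<Longrightarrow> K \<noteq> set xs \<Longrightarrow>
      \<exists>ys. distinct ys \<and> K \<subseteq> set ys \<and> set ys \<subseteq> set xs \<and> length ys < length xs
        \<and> tour_weight w ys \<le> tour_weight w xs"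
  shows "distinct xs \<Longrightarrow> K \<subseteq> set xs \<Longrightarrow> set xs \<subseteq> V \<Longrightarrow>
     \<exists>ys. distinct ys \<and> set ys = K \<and> tour_weight w ys \<le> tour_weight w xs"
proof (induction xs rule: length_induct)
  case (1 xs)
  show ?case
  proof (cases "K = set xs")
    case True then show ?thesis using 1 by auto
  next
    case False
    then obtain ys where ys: "distinct ys" "K \<subseteq> set ys" "set ys \<subseteq> set xs" "length ys < length xs"
        "tour_weight w ys \<le> tour_weight w xs" using step 1 by blast
    then obtain zs where "distinct zs" "set zs = K" "tour_weight w zs \<le> tour_weight w ys"
      using 1 by (meson order_trans)
    then show ?thesis using ys by (metis order_trans)
  qed
qed

lemma adjacent:
  assumes "a \<in> set xs" "a \<in> K" "b \<in> set xs" "b \<notin> K"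
  shows "\<exists>us x y vs. xs = us @ x # y # vs \<and> (x \<in> K) \<noteq> (y \<in> K)"
  using assms
proof (induction xs arbitrary: a b)
  case (Cons c ys)
  show ?case
  proof (cases "ys = []")
    case True then show ?thesis using Cons by auto
  next
    case False
    then obtain d zs where Cons2: "ys = d # zs" by (cases ys) auto
    show ?thesis
    proof (cases "(c \<in> K) = (d \<in> K)")
      case True
      have "\<exists>a\<in>set ys. a \<in> K" using Cons.prems True Cons2 by auto
      moreover have "\<exists>b\<in>set ys. b \<notin> K" using Cons.prems True Cons2 by auto
      ultimately obtain us x y vs where "ys = us @ x # y # vs \<and> (x \<in> K) \<noteq> (y \<in> K)"
        using Cons.IH by blast
      then show ?thesis by (metis append_Cons)
    next
      case False
      then show ?thesis using Cons2 by (metis append_Nil)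
    qed
  qed
qed simp

lemma good_tri1:
  assumes "tsp_instance V w" "g \<in> good_vertices V w" "a \<in> V" "b \<in> V"
  shows "w a b \<le> w a g + w g b"
proof -
  have g: "g \<in> V" "\<not> violating w g a b" using assms(2,3,4)
    unfolding good_vertices_def bad_vertices_def by auto
  have nn: "\<forall>a\<in>V. \<forall>b\<in>V. w a b = w b a \<and> w a b \<ge> 0" "\<forall>a\<in>V. w a a = 0"
    using assms(1) unfolding tsp_instance_def by auto
  show ?thesis
  proof (cases "a = b \<or> a = g \<or> b = g")
    case True
    then show ?thesis using nn g assms(3,4) by (metis add.commute add_increasing2 add_0 order_refl)
  next
    case False
    then show ?thesis using g(2) unfolding violating_def by auto
  qed
qed

lemma good_tri2:
  assumes "tsp_instance V w" "g \<in> good_vertices V w" "x \<in> V" "y \<in> V"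
  shows "w g y \<le> w g x + w x y"
proof -
  have g: "g \<in> V" "\<not> violating w g x y" using assms(2,3,4)
    unfolding good_vertices_def bad_vertices_def by auto
  have nn: "\<forall>a\<in>V. \<forall>b\<in>V. w a b = w b a \<and> w a b \<ge> 0" "\<forall>a\<in>V. w a a = 0"
    using assms(1) unfolding tsp_instance_def by auto
  show ?thesis
  proof (cases "x = y \<or> x = g \<or> y = g")
    case True
    then show ?thesis using nn g assms(3,4) by (metis add.commute add_increasing2 add_0 order_refl)
  next
    case False
    then show ?thesis using g(2) unfolding violating_def by auto
  qed
qed

theorem lemma1:
  fixes V :: "'a set" and w :: "'a \<Rightarrow> 'a \<Rightarrow> real" and v\<^sub>o :: 'a
    and Tb Tg :: "'a list"
  assumes "tsp_instance V w"
    and "min (card (good_vertices V w)) (card (bad_vertices V w)) \<ge> 3"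
    and "v\<^sub>o \<in> good_vertices V w"
    and "is_min_tour w (bad_vertices V w \<union> {v\<^sub>o}) Tb"
    and "is_min_tour w (good_vertices V w) Tg"
  shows "OPT V w \<ge> tour_weight w Tb \<and> OPT V w \<ge> tour_weight w Tg"
proof -
  let ?B = "bad_vertices V w" and ?G = "good_vertices V w"
  have fin: "finite V" using assms(1) unfolding tsp_instance_def by simp
  have BV: "?B \<subseteq> V" unfolding bad_vertices_def by auto
  have GV: "?G \<subseteq> V" unfolding good_vertices_def by auto
  have cB: "card ?B \<ge> 3" and cG: "card ?G \<ge> 3" using assms(2) by auto
  have sym: "\<And>a b. a \<in> V \<Longrightarrow> b \<in> V \<Longrightarrow> w a b = w b a"
    using assms(1) unfolding tsp_instance_def by auto
  let ?S = "{tour_weight w xs | xs. is_tour V xs}"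
  have "?S \<subseteq> tour_weight w ` {xs. set xs \<subseteq> V \<and> distinct xs}"
    unfolding is_tour_def by auto
  hence finS: "finite ?S" using finite_subset_distinct[OF fin] finite_subset by blast
  obtain T0 where T0: "set T0 = V" "distinct T0" using finite_distinct_list[OF fin] by blast
  have "card V \<ge> 3" using cB card_mono[OF fin BV] by linarith
  hence "is_tour V T0" using T0 distinct_card[OF T0(2)] unfolding is_tour_def by simp
  hence "?S \<noteq> {}" by blast
  from Min_in[OF finS this] obtain T where T: "is_tour V T" "OPT V w = tour_weight w T"
    unfolding OPT_def by auto
  have Td: "distinct T" "set T = V" using T(1) unfolding is_tour_def by auto
  let ?K = "?B \<union> {v\<^sub>o}"
  have oV: "v\<^sub>o \<in> V" using assms(3) GV by auto
  have "\<exists>ys. distinct ys \<and> set ys = ?K \<and> tour_weight w ys \<le> tour_weight w T"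
  proof (rule shrink[where V = V])
    fix xs assume xs: "distinct xs" "?K \<subseteq> set xs" "set xs \<subseteq> V" "?K \<noteq> set xs"
    then obtain x where x: "x \<in> set xs" "x \<notin> ?K" by blast
    then have xg: "x \<in> ?G" using xs(3) unfolding good_vertices_def by auto
    obtain us vs where uv: "xs = us @ x # vs" using split_list[OF x(1)] by blast
    have sub: "?K \<subseteq> set (us @ vs)" using xs(2) x(2) uv by auto
    have ne: "vs @ us \<noteq> []" using sub by auto
    have lh: "last (vs @ us) \<in> V" "hd (vs @ us) \<in> V"
      using ne xs(3) uv last_in_set[OF ne] hd_in_set[OF ne] by auto
    have "tour_weight w (us @ vs) \<le> tour_weight w xs"
      unfolding uv by (rule tw_remove[OF ne good_tri1[OF assms(1) xg lh]])
    then show "\<exists>ys. distinct ys \<and> ?K \<subseteq> set ys \<and> set ys \<subseteq> set xs \<and> length ys < length xs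
        \<and> tour_weight w ys \<le> tour_weight w xs"
      using sub xs(1) uv by (intro exI[of _ "us @ vs"]) auto
  qed (use Td BV oV in auto)
  then obtain ys where ys: "distinct ys" "set ys = ?K" "tour_weight w ys \<le> tour_weight w T" by blast
  have "finite ?K" using fin BV oV finite_subset by auto
  hence "card ?B \<le> card ?K" by (rule card_mono) auto
  hence "card ?K \<ge> 3" using cB by linarith
  hence "is_tour ?K ys" using ys distinct_card[OF ys(1)] unfolding is_tour_def by simp
  hence r1: "tour_weight w Tb \<le> OPT V w" using assms(4) ys(3) T(2) unfolding is_min_tour_def by force
  have "\<exists>ys. distinct ys \<and> set ys = ?G \<and> tour_weight w ys \<le> tour_weight w T"
  proof (rule shrink[where V = V])
    fix xs assume xs: "distinct xs" "?G \<subseteq> set xs" "set xs \<subseteq> V" "?G \<noteq> set xs"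
    then obtain b where b: "b \<in> set xs" "b \<notin> ?G" by blast
    have "v\<^sub>o \<in> set xs" using xs(2) assms(3) by blast
    then obtain us0 x y vs0 where uv0: "xs = us0 @ x # y # vs0" "(x \<in> ?G) \<noteq> (y \<in> ?G)"
      using adjacent[of v\<^sub>o xs ?G b] assms(3) b by blast
    obtain us x' vs where uv: "xs = us @ x' # vs" "x' \<notin> ?G"
      and nb: "(vs @ us \<noteq> [] \<and> hd (vs @ us) \<in> ?G) \<or> (vs @ us \<noteq> [] \<and> last (vs @ us) \<in> ?G)"
    proof (cases "x \<in> ?G")
      case True
      then show ?thesis using that[of "us0 @ [x]" y vs0] uv0 by auto
    next
      case False
      then show ?thesis using that[of us0 x "y # vs0"] uv0 by auto
    qed
    have sub: "?G \<subseteq> set (us @ vs)" using xs(2) uv by auto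
    have ne: "vs @ us \<noteq> []" using nb by auto
    have lh: "last (vs @ us) \<in> V" "hd (vs @ us) \<in> V" "x' \<in> V"
      using ne xs(3) uv last_in_set[OF ne] hd_in_set[OF ne] by auto
    have tri: "w (last (vs @ us)) (hd (vs @ us)) \<le> w (last (vs @ us)) x' + w x' (hd (vs @ us))"
      using nb
    proof
      assume h: "vs @ us \<noteq> [] \<and> hd (vs @ us) \<in> ?G"
      have "w (hd (vs @ us)) (last (vs @ us)) \<le> w (hd (vs @ us)) x' + w x' (last (vs @ us))"
        using good_tri2[OF assms(1) conjunct2[OF h] lh(3) lh(1)] .
      then show ?thesis using sym lh by (simp add: add.commute)
    next
      assume h: "vs @ us \<noteq> [] \<and> last (vs @ us) \<in> ?G"
      show ?thesis using good_tri2[OF assms(1) conjunct2[OF h] lh(3) lh(2)] .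
    qed
    have "tour_weight w (us @ vs) \<le> tour_weight w xs"
      unfolding uv by (rule tw_remove[OF ne tri])
    then show "\<exists>ys. distinct ys \<and> ?G \<subseteq> set ys \<and> set ys \<subseteq> set xs \<and> length ys < length xs
        \<and> tour_weight w ys \<le> tour_weight w xs"
      using sub xs(1) uv by (intro exI[of _ "us @ vs"]) auto
  qed (use Td GV in auto)
  then obtain zs where zs: "distinct zs" "set zs = ?G" "tour_weight w zs \<le> tour_weight w T" by blast
  have "is_tour ?G zs" using zs cG distinct_card[OF zs(1)] unfolding is_tour_def by simp
  hence r2: "tour_weight w Tg \<le> OPT V w" using assms(5) zs(3) T(2) unfolding is_min_tour_def by force
  show ?thesis using r1 r2 by simp
qed

end
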